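(* Let $X,Y,Z$ be random variables on finite alphabets $\mathcal{X},\mathcal{Y},\mathcal{Z}$. For each $y\in\mathcal{Y}$ with $\Pr(Y=y)>0$, let $(A_y,B_y,C_y)$ be the random triple on $\mathcal{X}\times\mathcal{Y}\times\mathcal{Z}$ with $\Pr(A_y=x,B_y=y',C_y=z)=0$ if $\Pr(Z=z)=0$ and $\Pr(A_y=x,B_y=y',C_y=z)=\Pr(X=x,Y=y',Z=z)\Pr(Z=z\mid Y=y)/\Pr(Z=z)$ otherwise. Let $A_{Z|Y}$ be a random variable on $\mathcal{X}$, jointly distributed with $Y$, such that $\Pr(A_{Z|Y}=x,Y=y)=\Pr(Y=y)\Pr(A_y=x)$ for all $x\in\mathcal{X}$ and all $y$ with $\Pr(Y=y)>0$. Let $\operatorname{Un}(X\to Z\mid Y)=\sum_{y:\Pr(Y=y)>0}\Pr(Y=y)I(A_y;C_y)$ and $\operatorname{Red}(X,Y\to Z)=I(X;Z)-\operatorname{Un}(X\to Z\mid Y)$. Then $\operatorname{Red}(X,Y\to Z)=I(A_{Z|Y};Y)$.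
   Context: $I$ denotes mutual information. *)

theory Defs
  imports "HOL-Probability.Probability"
begin

definition mi_fun :: "('a::finite \<times> 'b::finite \<Rightarrow> real) \<Rightarrow> real" where
  "mi_fun f = (\<Sum>a\<in>UNIV. \<Sum>b\<in>UNIV. if f (a, b) = 0 then 0
      else f (a, b) * log 2 (f (a, b) / ((\<Sum>b'\<in>UNIV. f (a, b')) * (\<Sum>a'\<in>UNIV. f (a', b)))))"

definition mutual_info :: "('a::finite \<times> 'b::finite) pmf \<Rightarrow> real" where
  "mutual_info q = mi_fun (pmf q)"

definition pY :: "('x \<times> 'y \<times> 'z) pmf \<Rightarrow> 'y \<Rightarrow> real" where
  "pY P y = pmf (map_pmf (\<lambda>(x, y, z). y) P) y"

definition pZ :: "('x \<times> 'y \<times> 'z) pmf \<Rightarrow> 'z \<Rightarrow> real" where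
  "pZ P z = pmf (map_pmf (\<lambda>(x, y, z). z) P) z"

definition pYZ :: "('x \<times> 'y \<times> 'z) pmf \<Rightarrow> 'y \<Rightarrow> 'z \<Rightarrow> real" where
  "pYZ P y z = pmf (map_pmf (\<lambda>(x, y, z). (y, z)) P) (y, z)"

definition condZY :: "('x \<times> 'y \<times> 'z) pmf \<Rightarrow> 'z \<Rightarrow> 'y \<Rightarrow> real" where
  "condZY P z y = pYZ P y z / pY P y"

definition triple :: "('x \<times> 'y \<times> 'z) pmf \<Rightarrow> 'y \<Rightarrow> 'x \<times> 'y \<times> 'z \<Rightarrow> real" where
  "triple P y = (\<lambda>(x, y', z). if pZ P z = 0 then 0
                   else pmf P (x, y', z) * condZY P z y / pZ P z)"

definition pA :: "('x \<times> 'y::finite \<times> 'z::finite) pmf \<Rightarrow> 'y \<Rightarrow> 'x \<Rightarrow> real" where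
  "pA P y x = (\<Sum>y'\<in>UNIV. \<Sum>z\<in>UNIV. triple P y (x, y', z))"

definition I_AC :: "('x::finite \<times> 'y::finite \<times> 'z::finite) pmf \<Rightarrow> 'y \<Rightarrow> real" where
  "I_AC P y = mi_fun (\<lambda>(x, z). \<Sum>y'\<in>UNIV. triple P y (x, y', z))"

definition UnI :: "('x::finite \<times> 'y::finite \<times> 'z::finite) pmf \<Rightarrow> real" where
  "UnI P = (\<Sum>y\<in>{y. pY P y > 0}. pY P y * I_AC P y)"

definition Red :: "('x::finite \<times> 'y::finite \<times> 'z::finite) pmf \<Rightarrow> real" where
  "Red P = mutual_info (map_pmf (\<lambda>(x, y, z). (x, z)) P) - UnI P"

end

theory Submission
  imports Defs
begin

definition G :: "real \<Rightarrow> real" where "G t = t * log 2 t"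

lemma G0[simp]: "G 0 = 0" by (simp add: G_def)

lemma G_mult: "0 \<le> a \<Longrightarrow> 0 \<le> b \<Longrightarrow> G (a*b) = a * G b + b * G a"
  by (cases "a = 0 \<or> b = 0") (auto simp: G_def log_mult_pos algebra_simps)

lemma G_div: "0 \<le> a \<Longrightarrow> 0 \<le> c \<Longrightarrow> (c = 0 \<Longrightarrow> a = 0) \<Longrightarrow> c * G (a/c) = G a - a * log 2 c"
  by (cases "a = 0"; cases "c = 0") (auto simp: G_def log_divide_pos algebra_simps)

lemma mi_G:
  fixes f :: "'a::finite \<times> 'b::finite \<Rightarrow> real"
  assumes nn: "\<And>a b. f (a,b) \<ge> 0"
  shows "mi_fun f = (\<Sum>a\<in>UNIV. \<Sum>b\<in>UNIV. G (f (a,b))) - (\<Sum>a\<in>UNIV. G (\<Sum>b\<in>UNIV. f (a,b)))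
      - (\<Sum>b\<in>UNIV. G (\<Sum>a\<in>UNIV. f (a,b)))"
proof -
  have t: "(if f (a, b) = 0 then 0
      else f (a, b) * log 2 (f (a, b) / ((\<Sum>b'\<in>UNIV. f (a, b')) * (\<Sum>a'\<in>UNIV. f (a', b)))))
     = G (f (a,b)) - f (a,b) * log 2 (\<Sum>b'\<in>UNIV. f (a, b')) - f (a,b) * log 2 (\<Sum>a'\<in>UNIV. f (a', b))" for a b
  proof (cases "f (a,b) = 0")
    case True then show ?thesis by (simp add: G_def)
  next
    case False
    then have p: "f (a,b) > 0" using nn[of a b] by linarith
    have "f (a,b) \<le> (\<Sum>b'\<in>UNIV. f (a, b'))" by (rule member_le_sum) (auto simp: nn)
    hence p1: "(\<Sum>b'\<in>UNIV. f (a, b')) > 0" using p by linarith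
    have "f (a,b) \<le> (\<Sum>a'\<in>UNIV. f (a', b))" by (rule member_le_sum[where f="\<lambda>a'. f (a',b)"]) (auto simp: nn)
    hence p2: "(\<Sum>a'\<in>UNIV. f (a', b)) > 0" using p by linarith
    show ?thesis using False p p1 p2 by (simp add: G_def log_divide_pos log_mult_pos algebra_simps)
  qed
  have s1: "(\<Sum>a\<in>UNIV. \<Sum>b\<in>UNIV. f (a,b) * log 2 (\<Sum>b'\<in>UNIV. f (a, b'))) = (\<Sum>a\<in>UNIV. G (\<Sum>b\<in>UNIV. f (a,b)))"
    by (simp add: G_def sum_distrib_right)
  have s2: "(\<Sum>a\<in>UNIV. \<Sum>b\<in>UNIV. f (a,b) * log 2 (\<Sum>a'\<in>UNIV. f (a', b))) = (\<Sum>b\<in>UNIV. G (\<Sum>a\<in>UNIV. f (a,b)))"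
    by (subst sum.swap) (simp add: G_def sum_distrib_right)
  show ?thesis unfolding mi_fun_def t using s1 s2 by (simp add: sum_subtractf)
qed

lemma pmf_map_fin: "pmf (map_pmf f (P :: ('a::finite) pmf)) b = (\<Sum>a\<in>UNIV. if f a = b then pmf P a else 0)"
  by (simp add: pmf_map measure_measure_pmf_finite sum.If_cases vimage_def Collect_conv_if)

lemma sum_if0: "(\<Sum>z\<in>A. if c then f z else 0) = (if c then \<Sum>z\<in>A. f z else 0)"
  by simp

lemma if_conj0: "(if a \<and> b then f else (0::real)) = (if a then (if b then f else 0) else 0)"
  by simp

lemma sum_triple: "(\<Sum>t\<in>(UNIV::('a::finite\<times>'b::finite\<times>'c::finite) set). f t) = (\<Sum>x\<in>UNIV. \<Sum>y\<in>UNIV. \<Sum>z\<in>UNIV. f (x,y,z))"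
  by (simp add: sum.cartesian_product flip: UNIV_Times_UNIV)

theorem lemma6:
  fixes P :: "('x::finite \<times> 'y::finite \<times> 'z::finite) pmf"
    and R :: "('x \<times> 'y) pmf"
  assumes "\<forall>x y. pY P y > 0 \<longrightarrow> pmf R (x, y) = pY P y * pA P y x"
  shows "Red P = mutual_info R"
proof -
  define p where "p = pmf P"
  have pnn: "p t \<ge> 0" for t unfolding p_def by simp
  define pxz where "pxz x z = (\<Sum>y\<in>UNIV. p (x,y,z))" for x z
  define pyz where "pyz y z = (\<Sum>x\<in>UNIV. p (x,y,z))" for y z
  define px where "px x = (\<Sum>z\<in>UNIV. pxz x z)" for x
  define pz where "pz z = (\<Sum>x\<in>UNIV. pxz x z)" for z
  define py where "py y = (\<Sum>z\<in>UNIV. pyz y z)" for y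
  have pxz_nn: "pxz x z \<ge> 0" for x z unfolding pxz_def by (simp add: pnn sum_nonneg)
  have pyz_nn: "pyz y z \<ge> 0" for y z unfolding pyz_def by (simp add: pnn sum_nonneg)
  have px_nn: "px x \<ge> 0" for x unfolding px_def by (simp add: pxz_nn sum_nonneg)
  have pz_nn: "pz z \<ge> 0" for z unfolding pz_def by (simp add: pxz_nn sum_nonneg)
  have py_nn: "py y \<ge> 0" for y unfolding py_def by (simp add: pyz_nn sum_nonneg)
  have pz_alt: "pz z = (\<Sum>y\<in>UNIV. pyz y z)" for z
    unfolding pz_def pxz_def pyz_def by (rule sum.swap)
  have tot: "(\<Sum>x\<in>UNIV. \<Sum>y\<in>UNIV. \<Sum>z\<in>UNIV. p (x,y,z)) = 1"
    using sum_pmf_eq_1[of UNIV P] by (simp add: sum_triple p_def)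
  have py_tot: "(\<Sum>y\<in>UNIV. py y) = 1"
  proof -
    have "(\<Sum>y\<in>UNIV. py y) = (\<Sum>y\<in>UNIV. \<Sum>x\<in>UNIV. \<Sum>z\<in>UNIV. p (x,y,z))"
      unfolding py_def pyz_def by (rule sum.cong[OF refl], rule sum.swap)
    also have "\<dots> = 1" using tot by (subst sum.swap) simp
    finally show ?thesis .
  qed
  have pyz_le_py: "pyz y z \<le> py y" for y z
    unfolding py_def by (rule member_le_sum) (auto simp: pyz_nn)
  have pyz_le_pz: "pyz y z \<le> pz z" for y z
    unfolding pz_alt by (rule member_le_sum[where f="\<lambda>y. pyz y z"]) (auto simp: pyz_nn)
  have pxz_le_pz: "pxz x z \<le> pz z" for x z
    unfolding pz_def by (rule member_le_sum[where f="\<lambda>x. pxz x z"]) (auto simp: pxz_nn)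

  have pY_eq: "pY P y = py y" for y
  proof -
    have "pY P y = (\<Sum>x\<in>UNIV. \<Sum>z\<in>UNIV. p (x,y,z))"
      unfolding pY_def pmf_map_fin sum_triple p_def by (simp add: sum_if0)
    also have "\<dots> = py y" unfolding py_def pyz_def by (rule sum.swap)
    finally show ?thesis .
  qed
  have pZ_eq: "pZ P z = pz z" for z
  proof -
    have "pZ P z = (\<Sum>x\<in>UNIV. \<Sum>y\<in>UNIV. p (x,y,z))"
      unfolding pZ_def pmf_map_fin sum_triple p_def by (simp add: sum_if0)
    then show ?thesis unfolding pz_def pxz_def .
  qed
  have pYZ_eq: "pYZ P y z = pyz y z" for y z
    unfolding pYZ_def pmf_map_fin sum_triple p_def pyz_def by (simp add: if_conj0 sum_if0 cong: if_cong)
  have XZ_eq: "pmf (map_pmf (\<lambda>(x, y, z). (x, z)) P) = (\<lambda>(x,z). pxz x z)"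
    by (rule ext) (auto simp: pmf_map_fin sum_triple p_def pxz_def if_conj0 sum_if0 cong: if_cong)
  define q where "q y x z = (if pz z = 0 then 0 else pxz x z * (pyz y z / py y) / pz z)" for y x z
  have q_nn: "q y x z \<ge> 0" for y x z unfolding q_def using pxz_nn pyz_nn py_nn pz_nn by simp
  have trip: "(\<Sum>y'\<in>UNIV. triple P y (x,y',z)) = q y x z" for y x z
    unfolding triple_def q_def condZY_def pZ_eq pYZ_eq pY_eq pxz_def p_def
    by (simp add: sum_if0 sum_divide_distrib[symmetric] sum_distrib_right[symmetric])
  have pA_eq: "pA P y x = (\<Sum>z\<in>UNIV. q y x z)" for y x
    unfolding pA_def by (subst sum.swap) (simp add: trip)
  have pA_nn: "pA P y x \<ge> 0" for y x unfolding pA_eq by (simp add: q_nn sum_nonneg)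
  have pz0: "pz z = 0 \<Longrightarrow> pyz y z = 0" for y z using pyz_le_pz[of y z] pyz_nn[of y z] by linarith
  have pz0': "pz z = 0 \<Longrightarrow> pxz x z = 0" for x z using pxz_le_pz[of x z] pxz_nn[of x z] by linarith
  have py0: "py y = 0 \<Longrightarrow> pyz y z = 0" for y z using pyz_le_py[of y z] pyz_nn[of y z] by linarith
  have sumx_q: "(\<Sum>x\<in>UNIV. q y x z) = pyz y z / py y" for y z
  proof (cases "pz z = 0")
    case True then show ?thesis by (simp add: q_def pz0)
  next
    case False
    have "(\<Sum>x\<in>UNIV. q y x z) = (\<Sum>x\<in>UNIV. pxz x z) * (pyz y z / py y) / pz z"
      using False by (simp add: q_def sum_divide_distrib[symmetric] sum_distrib_right[symmetric])
    also have "\<dots> = pyz y z / py y" using False by (simp add: pz_def[symmetric])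
    finally show ?thesis .
  qed
  define S where "S z = (\<Sum>x\<in>UNIV. G (pxz x z / pz z))" for z
  have sumx_Gq: "(\<Sum>x\<in>UNIV. G (q y x z)) = G (pyz y z / py y) + (pyz y z / py y) * S z" for y z
  proof (cases "pz z = 0")
    case True then show ?thesis by (simp add: q_def pz0)
  next
    case False
    have "(\<Sum>x\<in>UNIV. G (q y x z)) = (\<Sum>x\<in>UNIV. (pxz x z / pz z) * G (pyz y z / py y) + (pyz y z / py y) * G (pxz x z / pz z))"
    proof (rule sum.cong[OF refl])
      fix x
      have "q y x z = (pxz x z / pz z) * (pyz y z / py y)" using False by (simp add: q_def)
      then show "G (q y x z) = (pxz x z / pz z) * G (pyz y z / py y) + (pyz y z / py y) * G (pxz x z / pz z)"
        using G_mult[of "pxz x z / pz z" "pyz y z / py y"] pxz_nn[of x z] pyz_nn[of y z] py_nn[of y] pz_nn[of z]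
        by simp
    qed
    also have "\<dots> = (\<Sum>x\<in>UNIV. pxz x z) / pz z * G (pyz y z / py y) + (pyz y z / py y) * S z"
      by (simp add: S_def sum.distrib sum_distrib_left sum_distrib_right sum_divide_distrib)
    also have "\<dots> = G (pyz y z / py y) + (pyz y z / py y) * S z"
      using False by (simp add: pz_def[symmetric])
    finally show ?thesis .
  qed
  have IAC: "I_AC P y = (\<Sum>z\<in>UNIV. (pyz y z / py y) * S z) - (\<Sum>x\<in>UNIV. G (pA P y x))" for y
  proof -
    have "I_AC P y = mi_fun (\<lambda>(x,z). q y x z)"
      unfolding I_AC_def by (simp add: trip case_prod_beta)
    also have "\<dots> = (\<Sum>x\<in>UNIV. \<Sum>z\<in>UNIV. G (q y x z)) - (\<Sum>x\<in>UNIV. G (pA P y x)) - (\<Sum>z\<in>UNIV. G (pyz y z / py y))"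
      by (subst mi_G) (auto simp: q_nn pA_eq sumx_q)
    also have "(\<Sum>x\<in>UNIV. \<Sum>z\<in>UNIV. G (q y x z)) = (\<Sum>z\<in>UNIV. G (pyz y z / py y)) + (\<Sum>z\<in>UNIV. (pyz y z / py y) * S z)"
      by (subst sum.swap) (simp add: sumx_Gq sum.distrib)
    finally show ?thesis by simp
  qed
  have pzS: "pz z * S z = (\<Sum>x\<in>UNIV. G (pxz x z)) - G (pz z)" for z
  proof -
    have "pz z * S z = (\<Sum>x\<in>UNIV. G (pxz x z) - pxz x z * log 2 (pz z))"
      unfolding S_def sum_distrib_left
      by (rule sum.cong[OF refl], rule G_div) (auto simp: pxz_nn pz_nn pz0')
    also have "\<dots> = (\<Sum>x\<in>UNIV. G (pxz x z)) - G (pz z)"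
      by (simp add: sum_subtractf sum_distrib_right[symmetric] pz_def[symmetric] G_def)
    finally show ?thesis .
  qed
  define Ypos where "Ypos = {y. pY P y > 0}"
  have Ypos_eq: "Ypos = {y. py y > 0}" unfolding Ypos_def pY_eq ..
  have notY: "y \<notin> Ypos \<Longrightarrow> py y = 0" for y using py_nn[of y] unfolding Ypos_eq by auto
  define T where "T = (\<Sum>y\<in>Ypos. py y * (\<Sum>x\<in>UNIV. G (pA P y x)))"
  have UnI_eq: "UnI P = (\<Sum>z\<in>UNIV. \<Sum>x\<in>UNIV. G (pxz x z)) - (\<Sum>z\<in>UNIV. G (pz z)) - T"
  proof -
    have "UnI P = (\<Sum>y\<in>Ypos. (\<Sum>z\<in>UNIV. pyz y z * S z) - py y * (\<Sum>x\<in>UNIV. G (pA P y x)))"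
      unfolding UnI_def Ypos_def[symmetric]
    proof (rule sum.cong[OF refl])
      fix y assume "y \<in> Ypos"
      then have "py y > 0" unfolding Ypos_eq by simp
      then show "pY P y * I_AC P y = (\<Sum>z\<in>UNIV. pyz y z * S z) - py y * (\<Sum>x\<in>UNIV. G (pA P y x))"
        by (simp add: pY_eq IAC right_diff_distrib sum_distrib_left)
    qed
    also have "\<dots> = (\<Sum>y\<in>Ypos. \<Sum>z\<in>UNIV. pyz y z * S z) - T"
      by (simp add: T_def sum_subtractf)
    also have "(\<Sum>y\<in>Ypos. \<Sum>z\<in>UNIV. pyz y z * S z) = (\<Sum>y\<in>UNIV. \<Sum>z\<in>UNIV. pyz y z * S z)"
      by (rule sum.mono_neutral_left) (auto simp: notY py0)
    also have "\<dots> = (\<Sum>z\<in>UNIV. pz z * S z)"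
      by (subst sum.swap) (simp add: pz_alt sum_distrib_right)
    also have "\<dots> = (\<Sum>z\<in>UNIV. \<Sum>x\<in>UNIV. G (pxz x z)) - (\<Sum>z\<in>UNIV. G (pz z))"
      by (simp add: pzS sum_subtractf)
    finally show ?thesis .
  qed
  have MXZ: "mutual_info (map_pmf (\<lambda>(x, y, z). (x, z)) P) = (\<Sum>x\<in>UNIV. \<Sum>z\<in>UNIV. G (pxz x z)) - (\<Sum>x\<in>UNIV. G (px x)) - (\<Sum>z\<in>UNIV. G (pz z))"
    unfolding mutual_info_def XZ_eq
    by (subst mi_G) (auto simp: pxz_nn px_def pz_def)
  have Red_eq: "Red P = T - (\<Sum>x\<in>UNIV. G (px x))"
    unfolding Red_def MXZ UnI_eq by (subst (2) sum.swap) simp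
  have sumx_pA: "(\<Sum>x\<in>UNIV. pA P y x) = 1" if "py y > 0" for y
  proof -
    have "(\<Sum>x\<in>UNIV. pA P y x) = (\<Sum>z\<in>UNIV. pyz y z / py y)"
      unfolding pA_eq by (subst sum.swap) (simp add: sumx_q)
    also have "\<dots> = 1" using that by (simp add: sum_divide_distrib[symmetric] py_def[symmetric])
    finally show ?thesis .
  qed
  have pyq: "py y * q y x z = (if pz z = 0 then 0 else pxz x z * pyz y z / pz z)" for y x z
    by (cases "py y = 0") (auto simp: q_def py0)
  have sumy_pA: "(\<Sum>y\<in>Ypos. py y * pA P y x) = px x" for x
  proof -
    have "(\<Sum>y\<in>Ypos. py y * pA P y x) = (\<Sum>y\<in>UNIV. py y * pA P y x)"
      by (rule sum.mono_neutral_left) (auto simp: notY)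
    also have "\<dots> = (\<Sum>z\<in>UNIV. \<Sum>y\<in>UNIV. py y * q y x z)"
      unfolding pA_eq sum_distrib_left by (rule sum.swap)
    also have "\<dots> = (\<Sum>z\<in>UNIV. pxz x z)"
    proof (rule sum.cong[OF refl])
      fix z
      show "(\<Sum>y\<in>UNIV. py y * q y x z) = pxz x z"
      proof (cases "pz z = 0")
        case True then show ?thesis by (simp add: pyq pz0')
      next
        case False
        then show ?thesis
          by (simp add: pyq sum_divide_distrib[symmetric] sum_distrib_left[symmetric] pz_alt[symmetric])
      qed
    qed
    finally show ?thesis unfolding px_def .
  qed
  define r where "r x y = (if py y > 0 then py y * pA P y x else 0)" for x y
  have Rtot: "(\<Sum>y\<in>UNIV. \<Sum>x\<in>UNIV. pmf R (x,y)) = 1"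
  proof -
    have "sum (pmf R) UNIV = 1" by (rule sum_pmf_eq_1) auto
    then have "(\<Sum>x\<in>UNIV. \<Sum>y\<in>UNIV. pmf R (x,y)) = 1"
      by (simp add: sum.cartesian_product flip: UNIV_Times_UNIV)
    then show ?thesis by (subst sum.swap)
  qed
  have Rpos: "(\<Sum>y\<in>Ypos. \<Sum>x\<in>UNIV. pmf R (x,y)) = 1"
  proof -
    have "(\<Sum>y\<in>Ypos. \<Sum>x\<in>UNIV. pmf R (x,y)) = (\<Sum>y\<in>Ypos. py y)"
      using assms by (auto intro!: sum.cong simp: Ypos_def pY_eq sum_distrib_left[symmetric] sumx_pA)
    also have "\<dots> = (\<Sum>y\<in>UNIV. py y)"
      by (rule sum.mono_neutral_left) (auto simp: notY)
    finally show ?thesis using py_tot by simp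
  qed
  have Rneg: "(\<Sum>y\<in>-Ypos. \<Sum>x\<in>UNIV. pmf R (x,y)) = 0"
    using Rtot Rpos sum.subset_diff[of Ypos UNIV "\<lambda>y. \<Sum>x\<in>UNIV. pmf R (x,y)"]
    by (simp add: Compl_eq_Diff_UNIV)
  have R0: "pmf R (x,y) = 0" if "y \<notin> Ypos" for x y
  proof -
    have "(\<Sum>x\<in>UNIV. pmf R (x,y)) = 0"
      using Rneg that by (subst (asm) sum_nonneg_eq_0_iff) (auto intro: sum_nonneg)
    then show ?thesis by (subst (asm) sum_nonneg_eq_0_iff) auto
  qed
  have R_eq: "pmf R = (\<lambda>(x,y). r x y)"
  proof (rule ext, clarify)
    fix x y
    show "pmf R (x,y) = r x y"
      using assms R0[of y x] unfolding r_def Ypos_eq by (auto simp: pY_eq)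
  qed
  have r_nn: "r x y \<ge> 0" for x y unfolding r_def using py_nn pA_nn by simp
  have sumx_r: "(\<Sum>x\<in>UNIV. r x y) = py y" for y
    using sumx_pA[of y] py_nn[of y] by (cases "py y > 0") (auto simp: r_def sum_distrib_left[symmetric])
  have sumy_r: "(\<Sum>y\<in>UNIV. r x y) = px x" for x
  proof -
    have "(\<Sum>y\<in>UNIV. r x y) = (\<Sum>y\<in>Ypos. r x y)"
      by (rule sum.mono_neutral_right) (auto simp: r_def Ypos_eq)
    also have "\<dots> = px x" unfolding sumy_pA[symmetric]
      by (rule sum.cong) (auto simp: r_def Ypos_eq)
    finally show ?thesis .
  qed
  have Gr: "(\<Sum>x\<in>UNIV. G (r x y)) = (if py y > 0 then py y * (\<Sum>x\<in>UNIV. G (pA P y x)) + G (py y) else 0)" for y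
  proof (cases "py y > 0")
    case True
    have "(\<Sum>x\<in>UNIV. G (r x y)) = (\<Sum>x\<in>UNIV. py y * G (pA P y x) + pA P y x * G (py y))"
      using True py_nn pA_nn by (auto intro!: sum.cong simp: r_def G_mult)
    also have "\<dots> = py y * (\<Sum>x\<in>UNIV. G (pA P y x)) + G (py y)"
      using sumx_pA[OF True] by (simp add: sum.distrib sum_distrib_left sum_distrib_right[symmetric])
    finally show ?thesis using True by simp
  qed (simp add: r_def)
  have MR: "mutual_info R = T - (\<Sum>x\<in>UNIV. G (px x))"
  proof -
    have "mutual_info R = (\<Sum>x\<in>UNIV. \<Sum>y\<in>UNIV. G (r x y)) - (\<Sum>x\<in>UNIV. G (px x)) - (\<Sum>y\<in>UNIV. G (py y))"
      unfolding mutual_info_def R_eq by (subst mi_G) (auto simp: r_nn sumx_r sumy_r)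
    also have "(\<Sum>x\<in>UNIV. \<Sum>y\<in>UNIV. G (r x y)) = (\<Sum>y\<in>UNIV. if py y > 0 then py y * (\<Sum>x\<in>UNIV. G (pA P y x)) + G (py y) else 0)"
      by (subst sum.swap) (simp add: Gr)
    also have "\<dots> = (\<Sum>y\<in>Ypos. py y * (\<Sum>x\<in>UNIV. G (pA P y x)) + G (py y))"
      by (simp add: sum.If_cases Ypos_eq)
    also have "\<dots> = T + (\<Sum>y\<in>Ypos. G (py y))" by (simp add: T_def sum.distrib)
    also have "(\<Sum>y\<in>Ypos. G (py y)) = (\<Sum>y\<in>UNIV. G (py y))"
      by (rule sum.mono_neutral_left) (auto simp: notY)
    finally show ?thesis by simp
  qed
  show ?thesis using Red_eq MR by simp
qed
end
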